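(* Let $A$ be as in the context, and assume that (i) no two con-edges for the same cluster belong to the same connected component of the conflict graph $K_A$; (ii) $A[\rho]$ is connected for every cluster $\rho$; (iii) no con-edge for a cluster $\rho$ is a bridge of $A[\rho]$; (iv) $K_A$ is bipartite; (v) $A$ contains no self-loop. Let $e$ be a con-edge of $A$ that crosses no other con-edge of $A$. Then there exists a planar set of spanning trees for $A$ if and only if there exists a planar set $S'$ of spanning trees for $A$ with $e\in S'$.
   Context: Let $C(G,T)$ be an embedded flat clustered graph: $G$ is a planar graph with a fixed planar embedding, $T$ a rooted tree whose leaves are the vertices of $G$ and whose non-root internal nodes (clusters) are all children of the root; a vertex belongs to the cluster that is its parent. For a face $f$ of $G$ let $B_f$ be the clockwise sequence of vertex occurrences on its boundary. A con-edge for a cluster $\alpha$ is a pair of occurrences on the boundary of one face $f$ of two distinct vertices of $\alpha$ lying in different connected components of $G[\alpha]$, drawn inside $f$; two con-edges in the same face cross (have a conflict) if their occurrences alternate along $B_f$. The multigraph of con-edges is obtained by inserting all con-edges into the faces, contracting each connected component of each $G[\alpha]$ into one vertex (belonging to $\alpha$), and deleting the edges of $G$. Throughout, $A$ denotes this multigraph or any multigraph obtained from it by a sequence of operations each of which removes some edges or contracts some edges that cross no other edge (contracting identifies the two end-vertices and deletes the edge). $A[\alpha]$ is the subgraph formed by the con-edges for $\alpha$. The conflict graph $K_A$ has one vertex per con-edge of $A$ and an edge between any two crossing con-edges. A planar set of spanning trees for $A$ is a set $S$ of edges of $A$ such that, for each cluster $\alpha$, the edges of $S$ for $\alpha$ form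 a tree spanning all vertices of $A$ belonging to $\alpha$, and no two edges of $S$ cross. *)

theory Defs
  imports Main
begin

text \<open>Vertices of A are the contracted components; each con-edge lies in a face and
  is given by two distinct positions (occurrences) on the boundary sequence B_f
  of that face; B_f lists the (images in A of the) vertex occurrences of f.\<close>

record ('v, 'e, 'f, 'c) conmg =
  verts :: "'v set"
  edges :: "'e set"
  face  :: "'e \<Rightarrow> 'f"
  bnd   :: "'f \<Rightarrow> 'v list"
  occ1  :: "'e \<Rightarrow> nat"
  occ2  :: "'e \<Rightarrow> nat"
  vcl   :: "'v \<Rightarrow> 'c"

definition end1 :: "('v, 'e, 'f, 'c) conmg \<Rightarrow> 'e \<Rightarrow> 'v" where
  "end1 A e = bnd A (face A e) ! occ1 A e"

definition end2 :: "('v, 'e, 'f, 'c) conmg \<Rightarrow> 'e \<Rightarrow> 'v" where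
  "end2 A e = bnd A (face A e) ! occ2 A e"

definition ecl :: "('v, 'e, 'f, 'c) conmg \<Rightarrow> 'e \<Rightarrow> 'c" where
  "ecl A e = vcl A (end1 A e)"

definition clusters :: "('v, 'e, 'f, 'c) conmg \<Rightarrow> 'c set" where
  "clusters A = vcl A ` verts A"

definition wf_conmg :: "('v, 'e, 'f, 'c) conmg \<Rightarrow> bool" where
  "wf_conmg A \<longleftrightarrow> finite (verts A) \<and> finite (edges A) \<and>
     (\<forall>e\<in>edges A.
        occ1 A e < length (bnd A (face A e)) \<and>
        occ2 A e < length (bnd A (face A e)) \<and>
        occ1 A e \<noteq> occ2 A e \<and>
        set (bnd A (face A e)) \<subseteq> verts A \<and>
        vcl A (end1 A e) = vcl A (end2 A e))"

definition between :: "nat \<Rightarrow> nat \<Rightarrow> nat \<Rightarrow> bool" where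
  "between a b x \<longleftrightarrow> min a b < x \<and> x < max a b"

text \<open>Two con-edges cross iff they lie in the same face and their occurrences
  alternate along the boundary sequence of that face.\<close>
definition cross :: "('v, 'e, 'f, 'c) conmg \<Rightarrow> 'e \<Rightarrow> 'e \<Rightarrow> bool" where
  "cross A e e' \<longleftrightarrow> e \<in> edges A \<and> e' \<in> edges A \<and> face A e = face A e' \<and>
     occ1 A e' \<notin> {occ1 A e, occ2 A e} \<and> occ2 A e' \<notin> {occ1 A e, occ2 A e} \<and>
     (between (occ1 A e) (occ2 A e) (occ1 A e') \<noteq> between (occ1 A e) (occ2 A e) (occ2 A e'))"

definition adj :: "('v, 'e, 'f, 'c) conmg \<Rightarrow> 'e set \<Rightarrow> ('v \<times> 'v) set" where
  "adj A F = {(u, v). \<exists>e\<in>F. (end1 A e = u \<and> end2 A e = v) \<or> (end1 A e = v \<and> end2 A e = u)}"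

definition connected_on :: "('v, 'e, 'f, 'c) conmg \<Rightarrow> 'e set \<Rightarrow> 'v set \<Rightarrow> bool" where
  "connected_on A F W \<longleftrightarrow> (\<forall>u\<in>W. \<forall>v\<in>W. (u, v) \<in> (adj A F)\<^sup>*)"

definition cl_edges :: "('v, 'e, 'f, 'c) conmg \<Rightarrow> 'e set \<Rightarrow> 'c \<Rightarrow> 'e set" where
  "cl_edges A F \<alpha> = {e \<in> F. ecl A e = \<alpha>}"

definition cl_verts :: "('v, 'e, 'f, 'c) conmg \<Rightarrow> 'c \<Rightarrow> 'v set" where
  "cl_verts A \<alpha> = {v \<in> verts A. vcl A v = \<alpha>}"

definition spanning_tree :: "('v, 'e, 'f, 'c) conmg \<Rightarrow> 'e set \<Rightarrow> 'v set \<Rightarrow> bool" where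
  "spanning_tree A F W \<longleftrightarrow> F \<subseteq> edges A \<and> (\<forall>e\<in>F. end1 A e \<in> W \<and> end2 A e \<in> W) \<and>
     connected_on A F W \<and> (\<forall>e\<in>F. \<not> connected_on A (F - {e}) W)"

definition planar_sst :: "('v, 'e, 'f, 'c) conmg \<Rightarrow> 'e set \<Rightarrow> bool" where
  "planar_sst A S \<longleftrightarrow> S \<subseteq> edges A \<and>
     (\<forall>\<alpha>\<in>clusters A. spanning_tree A (cl_edges A S \<alpha>) (cl_verts A \<alpha>)) \<and>
     (\<forall>e\<in>S. \<forall>e'\<in>S. \<not> cross A e e')"

definition conflict_rel :: "('v, 'e, 'f, 'c) conmg \<Rightarrow> ('e \<times> 'e) set" where
  "conflict_rel A = {(e, e'). cross A e e'}"

definition conflict_bipartite :: "('v, 'e, 'f, 'c) conmg \<Rightarrow> bool" where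
  "conflict_bipartite A \<longleftrightarrow> (\<exists>X. \<forall>e e'. cross A e e' \<longrightarrow> (e \<in> X \<longleftrightarrow> e' \<notin> X))"

definition is_bridge :: "('v, 'e, 'f, 'c) conmg \<Rightarrow> 'c \<Rightarrow> 'e \<Rightarrow> bool" where
  "is_bridge A \<rho> e \<longleftrightarrow> (end1 A e, end2 A e) \<notin> (adj A (cl_edges A (edges A) \<rho> - {e}))\<^sup>*"

end

theory Submission
  imports Defs
begin

lemma adj_mono: "F \<subseteq> F' \<Longrightarrow> adj A F \<subseteq> adj A F'"
  unfolding adj_def by blast

lemma conn_mono: "F \<subseteq> F' \<Longrightarrow> connected_on A F W \<Longrightarrow> connected_on A F' W"
  unfolding connected_on_def using rtrancl_mono[OF adj_mono] by blast

lemma adj_sym_rt: "(u,v) \<in> (adj A F)\<^sup>* \<Longrightarrow> (v,u) \<in> (adj A F)\<^sup>*"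
proof -
  have "sym (adj A F)" unfolding sym_def adj_def by blast
  hence "sym ((adj A F)\<^sup>*)" by (rule sym_rtrancl)
  thus "(u,v) \<in> (adj A F)\<^sup>* \<Longrightarrow> (v,u) \<in> (adj A F)\<^sup>*" by (auto dest: symD)
qed

lemma cross_sym: "wf_conmg A \<Longrightarrow> cross A x y \<Longrightarrow> cross A y x"
  unfolding cross_def wf_conmg_def between_def
  by (auto simp: min_def max_def split: if_splits)

lemma L:
  assumes "(u,v) \<in> (adj A T)\<^sup>*"
  shows "(u,v) \<in> (adj A (T-{h}))\<^sup>* \<or> (u, end1 A h) \<in> (adj A (T-{h}))\<^sup>* \<or> (u, end2 A h) \<in> (adj A (T-{h}))\<^sup>*"
  using assms
proof (induction rule: rtrancl_induct)
  case base
  then show ?case by simp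
next
  case (step y z)
  from step(2) obtain h' where h': "h' \<in> T" "(end1 A h' = y \<and> end2 A h' = z) \<or> (end1 A h' = z \<and> end2 A h' = y)"
    unfolding adj_def by auto
  show ?case
  proof (cases "h' = h")
    case False
    hence "(y,z) \<in> adj A (T-{h})" using h' unfolding adj_def by blast
    thus ?thesis using step(3) by (meson rtrancl_into_rtrancl)
  next
    case True
    thus ?thesis using step(3) h' by auto
  qed
qed

lemma M:
  assumes h: "h \<in> T" "{end1 A h, end2 A h} = {a, c}"
  shows "(c,b) \<in> (adj A T)^^m \<Longrightarrow> (c,b) \<in> (adj A (T-{h}))\<^sup>* \<or> (\<exists>k\<le>m. (a,b) \<in> (adj A T)^^k)"
proof (induction m arbitrary: b)
  case 0
  then show ?case by simp
next
  case (Suc m)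
  from Suc.prems obtain z where z: "(c,z) \<in> (adj A T)^^m" "(z,b) \<in> adj A T" by auto
  from Suc.IH[OF z(1)] show ?case
  proof
    assume cz: "(c,z) \<in> (adj A (T-{h}))\<^sup>*"
    from z(2) obtain h' where h': "h' \<in> T" "(end1 A h' = z \<and> end2 A h' = b) \<or> (end1 A h' = b \<and> end2 A h' = z)"
      unfolding adj_def by auto
    show ?thesis
    proof (cases "h' = h")
      case False
      hence "(z,b) \<in> adj A (T-{h})" using h' unfolding adj_def by blast
      thus ?thesis using cz by (meson rtrancl_into_rtrancl)
    next
      case True
      hence "b = a \<or> b = c" using h' h(2) by auto
      thus ?thesis
      proof
        assume "b = a" thus ?thesis by (intro disjI2 exI[of _ 0]) auto
      qed auto
    qed
  next
    assume "\<exists>k\<le>m. (a,z) \<in> (adj A T)^^k"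
    then obtain k where "k \<le> m" "(a,z) \<in> (adj A T)^^k" by blast
    hence "Suc k \<le> Suc m" "(a,b) \<in> (adj A T)^^Suc k" using z(2) relpow_Suc_I by auto
    thus ?thesis by blast
  qed
qed


theorem lemma8:
  fixes A :: "('v, 'e, 'f, 'c) conmg" and e :: 'e
  assumes wf: "wf_conmg A"
    and i: "\<forall>e1\<in>edges A. \<forall>e2\<in>edges A. e1 \<noteq> e2 \<and> ecl A e1 = ecl A e2
              \<longrightarrow> (e1, e2) \<notin> (conflict_rel A)\<^sup>*"
    and ii: "\<forall>\<rho>\<in>clusters A. connected_on A (cl_edges A (edges A) \<rho>) (cl_verts A \<rho>)"
    and iii: "\<forall>\<rho>\<in>clusters A. \<forall>e'\<in>cl_edges A (edges A) \<rho>. \<not> is_bridge A \<rho> e'"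
    and iv: "conflict_bipartite A"
    and v: "\<forall>e'\<in>edges A. end1 A e' \<noteq> end2 A e'"
    and e_in: "e \<in> edges A"
    and e_free: "\<forall>e'\<in>edges A. \<not> cross A e e'"
  shows "(\<exists>S. planar_sst A S) \<longleftrightarrow> (\<exists>S'. planar_sst A S' \<and> e \<in> S')"
proof
  assume "\<exists>S'. planar_sst A S' \<and> e \<in> S'" thus "\<exists>S. planar_sst A S" by blast
next
  assume "\<exists>S. planar_sst A S"
  then obtain S where S: "planar_sst A S" by blast
  show "\<exists>S'. planar_sst A S' \<and> e \<in> S'"
  proof (cases "e \<in> S")
    case True thus ?thesis using S by blast
  next
    case False
    define \<alpha> where "\<alpha> = ecl A e"
    define W where "W = cl_verts A \<alpha>"
    define T where "T = cl_edges A S \<alpha>"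
    define a where "a = end1 A e"
    define b where "b = end2 A e"
    have wfe: "occ1 A e < length (bnd A (face A e))" "occ2 A e < length (bnd A (face A e))"
      "set (bnd A (face A e)) \<subseteq> verts A" "vcl A (end1 A e) = vcl A (end2 A e)"
      using wf e_in unfolding wf_conmg_def by auto
    have aV: "a \<in> verts A" using wfe nth_mem unfolding a_def end1_def by blast
    have bV: "b \<in> verts A" using wfe nth_mem unfolding b_def end2_def by blast
    have acl: "\<alpha> \<in> clusters A" unfolding clusters_def \<alpha>_def ecl_def using aV a_def by (simp add: ecl_def)
    have aW: "a \<in> W" unfolding W_def cl_verts_def using aV by (simp add: a_def \<alpha>_def ecl_def)
    have bW: "b \<in> W" unfolding W_def cl_verts_def using bV wfe by (simp add: a_def b_def \<alpha>_def ecl_def)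
    have ab: "a \<noteq> b" using v e_in a_def b_def by auto
    have SE: "S \<subseteq> edges A" using S unfolding planar_sst_def by blast
    have Tst: "spanning_tree A T W" using S acl unfolding planar_sst_def T_def W_def by blast
    have TE: "T \<subseteq> edges A" using Tst unfolding spanning_tree_def by blast
    have Tend: "\<forall>x\<in>T. end1 A x \<in> W \<and> end2 A x \<in> W" using Tst unfolding spanning_tree_def by blast
    have Tconn: "connected_on A T W" using Tst unfolding spanning_tree_def by blast
    have Tmin: "\<forall>x\<in>T. \<not> connected_on A (T - {x}) W" using Tst unfolding spanning_tree_def by blast
    have eT: "e \<notin> T" using False by (auto simp: T_def cl_edges_def)
    have finE: "finite (edges A)" using wf unfolding wf_conmg_def by blast
    have finT: "finite T" using TE finE finite_subset by blast
    have "(a,b) \<in> (adj A T)\<^sup>*" using Tconn aW bW unfolding connected_on_def by blast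
    then obtain n where "(a,b) \<in> (adj A T)^^n" using rtrancl_power by blast
    define n0 where "n0 = (LEAST n. (a,b) \<in> (adj A T)^^n)"
    have n0: "(a,b) \<in> (adj A T)^^n0" unfolding n0_def by (rule LeastI) fact
    have "n0 \<noteq> 0" using ab n0 by (cases n0) auto
    then obtain m where m: "n0 = Suc m" by (cases n0) auto
    then obtain c where ac: "(a,c) \<in> adj A T" and cb: "(c,b) \<in> (adj A T)^^m"
      using n0 relpow_Suc_D2 by metis
    from ac obtain h where h: "h\<in>T" "{end1 A h, end2 A h} = {a,c}" unfolding adj_def by auto
    have cbR': "(c,b) \<in> (adj A (T-{h}))\<^sup>*"
    proof -
      have "\<not> (\<exists>k\<le>m. (a,b) \<in> (adj A T)^^k)"
      proof
        assume "\<exists>k\<le>m. (a,b) \<in> (adj A T)^^k"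
        then obtain k where "k \<le> m" "(a,b) \<in> (adj A T)^^k" by blast
        hence "n0 \<le> k" unfolding n0_def by (rule_tac Least_le) 
        thus False using \<open>k \<le> m\<close> m by simp
      qed
      thus ?thesis using M[OF h cb] by blast
    qed
    define G where "G = insert e (T - {h})"
    have Gconn: "connected_on A G W"
    proof -
      have mono: "(adj A (T-{h}))\<^sup>* \<subseteq> (adj A G)\<^sup>*"
        by (rule rtrancl_mono[OF adj_mono]) (auto simp: G_def)
      have side: "(w,a) \<in> (adj A G)\<^sup>* \<or> (w,b) \<in> (adj A G)\<^sup>*" if "w \<in> W" for w
      proof -
        have "(w,a) \<in> (adj A T)\<^sup>*" using Tconn that aW unfolding connected_on_def by blast
        from L[OF this, of h] h(2)
        have "(w,a) \<in> (adj A (T-{h}))\<^sup>* \<or> (w,c) \<in> (adj A (T-{h}))\<^sup>*" by auto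
        hence "(w,a) \<in> (adj A (T-{h}))\<^sup>* \<or> (w,b) \<in> (adj A (T-{h}))\<^sup>*"
          using cbR' rtrancl_trans by metis
        thus ?thesis using mono by blast
      qed
      have ab': "(a,b) \<in> (adj A G)\<^sup>*"
        unfolding G_def adj_def a_def b_def by (rule r_into_rtrancl) auto
      have ba': "(b,a) \<in> (adj A G)\<^sup>*" using adj_sym_rt[OF ab'] .
      show ?thesis unfolding connected_on_def
      proof (intro ballI)
        fix u v assume "u \<in> W" "v \<in> W"
        from side[OF this(1)] side[OF this(2)] ab' ba'
        show "(u,v) \<in> (adj A G)\<^sup>*"
          using adj_sym_rt rtrancl_trans by metis
      qed
    qed
    define P where "P F \<longleftrightarrow> F \<subseteq> insert e T \<and> e \<in> F \<and> connected_on A F W" for F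
    have PG: "P G" using Gconn by (auto simp: P_def G_def)
    obtain F where F: "P F" and Fmin: "\<forall>F'. P F' \<longrightarrow> card F \<le> card F'"
      using ex_has_least_nat[of P G card] PG by blast
    have FeT: "F \<subseteq> insert e T" and eF: "e \<in> F" and Fconn: "connected_on A F W"
      using F unfolding P_def by auto
    have finF: "finite F" using FeT finT finite_subset by blast
    have cardG: "card G \<le> card T" unfolding G_def using finT h(1)
      by (simp add: card_insert_if card_Diff_singleton) (metis Suc_pred card_gt_0_iff empty_iff order.refl)
    have Ftree: "spanning_tree A F W"
      unfolding spanning_tree_def
    proof (intro conjI ballI)
      show "F \<subseteq> edges A" using FeT TE e_in by auto
      fix x assume "x \<in> F"
      thus "end1 A x \<in> W" "end2 A x \<in> W"
        using FeT Tend aW bW a_def b_def by auto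
    next
      show "connected_on A F W" by fact
    next
      fix g assume gF: "g \<in> F"
      show "\<not> connected_on A (F - {g}) W"
      proof
        assume gc: "connected_on A (F - {g}) W"
        show False
        proof (cases "g = e")
          case False
          hence "P (F - {g})" using FeT eF gc unfolding P_def by auto
          hence "card F \<le> card (F - {g})" using Fmin by blast
          thus False using gF finF card_Diff1_less by fastforce
        next
          case True
          have "F - {e} = T"
          proof (rule ccontr)
            assume "F - {e} \<noteq> T"
            then obtain t where "t \<in> T" "t \<notin> F - {e}" using FeT by blast
            hence "F - {e} \<subseteq> T - {t}" using FeT by blast
            hence "connected_on A (T - {t}) W" using gc True conn_mono by blast
            thus False using Tmin \<open>t \<in> T\<close> by blast
          qed
          hence "F = insert e T" using eF by blast
          hence "card F = Suc (card T)" using finT eT by simp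
          moreover have "card F \<le> card G" using Fmin PG by blast
          ultimately show False using cardG by simp
        qed
      qed
    qed
    have Fcl: "\<forall>x\<in>F. ecl A x = \<alpha>" using FeT by (auto simp: \<alpha>_def T_def cl_edges_def)
    define S' where "S' = (S - T) \<union> F"
    have S'sub: "S' \<subseteq> insert e S" using FeT by (auto simp: T_def cl_edges_def S'_def)
    show ?thesis
    proof (intro exI conjI)
      show "e \<in> S'" using eF by (simp add: S'_def)
      show "planar_sst A S'"
        unfolding planar_sst_def
      proof (intro conjI ballI)
        show "S' \<subseteq> edges A" using S'sub SE e_in by blast
      next
        fix \<beta> assume \<beta>: "\<beta> \<in> clusters A"
        show "spanning_tree A (cl_edges A S' \<beta>) (cl_verts A \<beta>)"
        proof (cases "\<beta> = \<alpha>")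
          case True
          have "cl_edges A S' \<beta> = F" using True Fcl unfolding S'_def T_def cl_edges_def by auto
          thus ?thesis using Ftree True W_def by simp
        next
          case False
          have "cl_edges A S' \<beta> = cl_edges A S \<beta>"
            using False Fcl unfolding S'_def T_def cl_edges_def by auto
          thus ?thesis using S \<beta> unfolding planar_sst_def by simp
        qed
      next
        fix x y assume "x \<in> S'" "y \<in> S'"
        hence xy: "x \<in> insert e S" "y \<in> insert e S" using S'sub by auto
        show "\<not> cross A x y"
        proof
          assume cxy: "cross A x y"
          hence xE: "x \<in> edges A" "y \<in> edges A" unfolding cross_def by auto
          show False
          proof (cases "x = e")
            case True thus False using e_free cxy xE by blast
          next
            case False
            show False
            proof (cases "y = e")
              case True thus False using e_free cross_sym[OF wf cxy] xE by blast
            next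
              case False
              thus False using \<open>x \<noteq> e\<close> xy S cxy unfolding planar_sst_def by blast
            qed
          qed
        qed
      qed
    qed
  qed
qed

end
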